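(* Let $(V,\varrho,K)$ be a representation of a difference Lie algebra $(\mathfrak g,D)$. Set $\mathfrak C^1=\mathrm{Hom}(\mathfrak g,V)$ and $\mathfrak C^n=\mathrm{Hom}(\wedge^n\mathfrak g,V)\oplus\mathrm{Hom}(\wedge^{n-1}\mathfrak g,V)$ for $n\ge2$, and define $\delta_\varrho:\mathfrak C^n\to\mathfrak C^{n+1}$ by $\delta_\varrho(f,\theta)=(d^{CE}_\varrho f,\ \partial\theta+T(f))$ (for $n=1$, $\delta_\varrho f=(d^{CE}_\varrho f,T(f))$). Then $\delta_\varrho\circ\delta_\varrho=0$.
   Context: A difference Lie algebra $(\mathfrak g,D)$: a Lie algebra with linear $D$ such that $D[x,y]=[x,D(y)]-[y,D(x)]+[D(x),D(y)]$. A representation $(V,\varrho,K)$: a Lie algebra representation $\varrho:\mathfrak g\to\mathfrak{gl}(V)$ and linear $K:V\to V$ with $K(\varrho(x)u)=\varrho(D(x))u+\varrho(x)K(u)+\varrho(D(x))K(u)$. $d^{CE}_\varrho$ is the Chevalley–Eilenberg differential of $\mathfrak g$ with coefficients in $(V,\varrho)$. For $\theta\in\mathrm{Hom}(\wedge^{n-1}\mathfrak g,V)$: $\partial\theta(x_1,\dots,x_n)=\sum_{i=1}^n(-1)^{i+1}\varrho(x_i)\theta(x_1,\dots,\hat x_i,\dots,x_n)+\sum_{i=1}^n(-1)^{i+1}\varrho(D(x_i))\theta(x_1,\dots,\hat x_i,\dots,x_n)+\sum_{i<j}(-1)^{i+j}\theta([x_i,x_j],x_1,\dots,\hat x_i,\dots,\hat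 x_j,\dots,x_n)$. For $f\in\mathrm{Hom}(\wedge^n\mathfrak g,V)$: $T(f)(x_1,\dots,x_n)=(-1)^n\big(\sum_{k=1}^n\sum_{1\le i_1<\cdots<i_k\le n}f(y_1,\dots,y_n)-K(f(x_1,\dots,x_n))\big)$, where $y_j=D(x_j)$ if $j\in\{i_1,\dots,i_k\}$ and $y_j=x_j$ otherwise. *)

theory Defs
  imports Main "HOL.Vector_Spaces"
begin

(* Vector spaces over a field 'k are given by scalar multiplications
   sg :: 'k => 'g => 'g and sv :: 'k => 'v => 'v (library locale vector_space).
   n-ary maps g^n -> V are represented as functions on lists 'g list => 'v,
   only evaluated on lists of length n. *)

definition lie_algebra :: "('k::field \<Rightarrow> 'g::ab_group_add \<Rightarrow> 'g) \<Rightarrow> ('g \<Rightarrow> 'g \<Rightarrow> 'g) \<Rightarrow> bool" where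
  "lie_algebra sg br \<longleftrightarrow> vector_space sg
     \<and> (\<forall>x. Vector_Spaces.linear sg sg (br x))
     \<and> (\<forall>y. Vector_Spaces.linear sg sg (\<lambda>x. br x y))
     \<and> (\<forall>x. br x x = 0)
     \<and> (\<forall>x y z. br x (br y z) + br y (br z x) + br z (br x y) = 0)"

definition difference_lie_algebra :: "('k::field \<Rightarrow> 'g::ab_group_add \<Rightarrow> 'g) \<Rightarrow> ('g \<Rightarrow> 'g \<Rightarrow> 'g) \<Rightarrow> ('g \<Rightarrow> 'g) \<Rightarrow> bool" where
  "difference_lie_algebra sg br D \<longleftrightarrow> lie_algebra sg br
     \<and> Vector_Spaces.linear sg sg D
     \<and> (\<forall>x y. D (br x y) = br x (D y) - br y (D x) + br (D x) (D y))"

definition diff_representation ::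
  "('k::field \<Rightarrow> 'g::ab_group_add \<Rightarrow> 'g) \<Rightarrow> ('g \<Rightarrow> 'g \<Rightarrow> 'g) \<Rightarrow> ('g \<Rightarrow> 'g)
   \<Rightarrow> ('k \<Rightarrow> 'v::ab_group_add \<Rightarrow> 'v) \<Rightarrow> ('g \<Rightarrow> 'v \<Rightarrow> 'v) \<Rightarrow> ('v \<Rightarrow> 'v) \<Rightarrow> bool" where
  "diff_representation sg br D sv rho K \<longleftrightarrow> vector_space sv
     \<and> (\<forall>x. Vector_Spaces.linear sv sv (rho x))
     \<and> (\<forall>u. Vector_Spaces.linear sg sv (\<lambda>x. rho x u))
     \<and> (\<forall>x y u. rho (br x y) u = rho x (rho y u) - rho y (rho x u))
     \<and> Vector_Spaces.linear sv sv K
     \<and> (\<forall>x u. K (rho x u) = rho (D x) u + rho x (K u) + rho (D x) (K u))"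

definition alt_multilinear ::
  "('k::field \<Rightarrow> 'g::ab_group_add \<Rightarrow> 'g) \<Rightarrow> ('k \<Rightarrow> 'v::ab_group_add \<Rightarrow> 'v) \<Rightarrow> nat \<Rightarrow> ('g list \<Rightarrow> 'v) \<Rightarrow> bool" where
  "alt_multilinear sg sv n f \<longleftrightarrow>
     (\<forall>xs i. length xs = n \<longrightarrow> i < n \<longrightarrow> Vector_Spaces.linear sg sv (\<lambda>y. f (xs[i := y])))
     \<and> (\<forall>xs i j. length xs = n \<longrightarrow> i < j \<longrightarrow> j < n \<longrightarrow> xs ! i = xs ! j \<longrightarrow> f xs = 0)"

definition sgnv :: "nat \<Rightarrow> 'v::ab_group_add \<Rightarrow> 'v" where
  "sgnv k v = (if even k then v else - v)"

definition del :: "nat \<Rightarrow> 'a list \<Rightarrow> 'a list" where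
  "del i xs = take i xs @ drop (Suc i) xs"

(* Chevalley-Eilenberg differential with coefficients in rho (0-based indices:
   (-1)^(i+1) for 1-based i becomes (-1)^i, and (-1)^(i+j) is unchanged). *)
definition dCE :: "('g \<Rightarrow> 'v \<Rightarrow> 'v) \<Rightarrow> ('g \<Rightarrow> 'g \<Rightarrow> 'g) \<Rightarrow> ('g list \<Rightarrow> 'v::ab_group_add) \<Rightarrow> 'g list \<Rightarrow> 'v" where
  "dCE rho br f xs =
     (\<Sum>i<length xs. sgnv i (rho (xs ! i) (f (del i xs))))
   + (\<Sum>(i, j)\<in>{(i, j). i < j \<and> j < length xs}.
        sgnv (i + j) (f (br (xs ! i) (xs ! j) # del i (del j xs))))"

definition partial_op :: "('g \<Rightarrow> 'v \<Rightarrow> 'v) \<Rightarrow> ('g \<Rightarrow> 'g \<Rightarrow> 'g) \<Rightarrow> ('g \<Rightarrow> 'g) \<Rightarrow> ('g list \<Rightarrow> 'v::ab_group_add) \<Rightarrow> 'g list \<Rightarrow> 'v" where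
  "partial_op rho br D theta = dCE (\<lambda>x u. rho x u + rho (D x) u) br theta"

definition T_op :: "('g \<Rightarrow> 'g) \<Rightarrow> ('v \<Rightarrow> 'v) \<Rightarrow> ('g list \<Rightarrow> 'v::ab_group_add) \<Rightarrow> 'g list \<Rightarrow> 'v" where
  "T_op D K f xs = sgnv (length xs)
     ((\<Sum>S\<in>{S. S \<subseteq> {..<length xs} \<and> S \<noteq> {}}.
         f (map (\<lambda>i. if i \<in> S then D (xs ! i) else xs ! i) [0..<length xs]))
      - K (f xs))"

(* the cochain space C^n: for n = 1 the second component is absent (taken to be 0) *)
definition cochain ::
  "('k::field \<Rightarrow> 'g::ab_group_add \<Rightarrow> 'g) \<Rightarrow> ('k \<Rightarrow> 'v::ab_group_add \<Rightarrow> 'v) \<Rightarrow> nat \<Rightarrow> ('g list \<Rightarrow> 'v) \<times> ('g list \<Rightarrow> 'v) \<Rightarrow> bool" where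
  "cochain sg sv n c \<longleftrightarrow> n \<ge> 1 \<and> alt_multilinear sg sv n (fst c)
     \<and> (if n = 1 then snd c = (\<lambda>_. 0) else alt_multilinear sg sv (n - 1) (snd c))"

definition delta :: "('g \<Rightarrow> 'v \<Rightarrow> 'v) \<Rightarrow> ('g \<Rightarrow> 'g \<Rightarrow> 'g) \<Rightarrow> ('g \<Rightarrow> 'g) \<Rightarrow> ('v \<Rightarrow> 'v)
    \<Rightarrow> ('g list \<Rightarrow> 'v::ab_group_add) \<times> ('g list \<Rightarrow> 'v) \<Rightarrow> ('g list \<Rightarrow> 'v) \<times> ('g list \<Rightarrow> 'v)" where
  "delta rho br D K c = (dCE rho br (fst c), \<lambda>xs. partial_op rho br D (snd c) xs + T_op D K (fst c) xs)"

end

theory Submission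
  imports Defs
begin


fun restf :: "nat set \<Rightarrow> nat \<Rightarrow> 'a list \<Rightarrow> 'a list" where
  "restf R k [] = []"
| "restf R k (x # xs) = (if k \<in> R then restf R (Suc k) xs else x # restf R (Suc k) xs)"

definition posf :: "nat set \<Rightarrow> nat \<Rightarrow> nat \<Rightarrow> nat" where
  "posf R k m = m - k - card {j\<in>R. k \<le> j \<and> j < m}"

lemma restf_cong: "(\<And>j. j \<ge> k \<Longrightarrow> j \<in> R \<longleftrightarrow> j \<in> R') \<Longrightarrow> restf R k xs = restf R' k xs"
  by (induction xs arbitrary: k) auto

lemma card_split_k:
  assumes "k < m"
  shows "card {j\<in>R. k \<le> j \<and> j < m} = (if k \<in> R then 1 else 0) + card {j\<in>R. Suc k \<le> j \<and> j < m}"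
proof -
  have e: "{j\<in>R. k \<le> j \<and> j < m} = (if k \<in> R then {k} else {}) \<union> {j\<in>R. Suc k \<le> j \<and> j < m}"
    using assms by (auto simp: Suc_le_eq le_less)
  have f: "finite {j\<in>R. Suc k \<le> j \<and> j < m}" by (rule finite_subset[of _ "{..<m}"]) auto
  show ?thesis unfolding e using f by (auto simp: card_insert_if)
qed

lemma card_le_k: "card {j\<in>R. k \<le> j \<and> j < m} \<le> m - k"
proof -
  have "card {j\<in>R. k \<le> j \<and> j < m} \<le> card {k..<m}" by (rule card_mono) auto
  then show ?thesis by simp
qed

lemma posf_step:
  assumes "k < m"
  shows "posf R k m = (if k \<in> R then posf R (Suc k) m else Suc (posf R (Suc k) m))"
  using card_split_k[OF assms, of R] card_le_k[of R "Suc k" m] assms unfolding posf_def by auto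

lemma restf_posf:
  assumes "m \<notin> R" "k \<le> m" "m < k + length xs"
  shows "posf R k m < length (restf R k xs) \<and> restf R k xs ! posf R k m = xs ! (m - k)
     \<and> del (posf R k m) (restf R k xs) = restf (insert m R) k xs"
  using assms
proof (induction xs arbitrary: k)
  case Nil then show ?case by simp
next
  case (Cons x xs)
  show ?case
  proof (cases "m = k")
    case True
    have p: "posf R k m = 0" unfolding posf_def using True by simp
    have "restf (insert k R) (Suc k) xs = restf R (Suc k) xs" by (rule restf_cong) auto
    then show ?thesis using True Cons.prems p by (simp add: del_def)
  next
    case False
    then have km: "k < m" using Cons.prems by simp
    have IH: "posf R (Suc k) m < length (restf R (Suc k) xs) \<and> restf R (Suc k) xs ! posf R (Suc k) m = xs ! (m - Suc k)
     \<and> del (posf R (Suc k) m) (restf R (Suc k) xs) = restf (insert m R) (Suc k) xs"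
      using Cons.IH[of "Suc k"] Cons.prems km by simp
    have xm: "(x # xs) ! (m - k) = xs ! (m - Suc k)" using km by (simp add: Suc_diff_Suc[symmetric])
    have kR: "k \<in> insert m R \<longleftrightarrow> k \<in> R" using km by auto
    show ?thesis using IH posf_step[OF km, of R] xm kR
      by (auto simp: del_def)
  qed
qed

lemma length_restf: "length (restf R k xs) = card ({k..<k + length xs} - R)"
proof (induction xs arbitrary: k)
  case Nil then show ?case by simp
next
  case (Cons x xs)
  have e: "{k..<k + length (x#xs)} - R = (if k \<in> R then {} else {k}) \<union> ({Suc k..<Suc k + length xs} - R)"
    by (auto simp: Suc_le_eq le_less)
  show ?case unfolding e using Cons.IH[of "Suc k"] by (auto simp: card_insert_if)
qed

definition rest :: "nat set \<Rightarrow> 'a list \<Rightarrow> 'a list" where "rest R xs = restf R 0 xs"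
definition pos :: "nat set \<Rightarrow> nat \<Rightarrow> nat" where "pos R m = posf R 0 m"

lemma rest_empty[simp]: "rest {} xs = xs"
proof -
  have "restf {} k xs = xs" for k by (induction xs arbitrary: k) auto
  then show ?thesis unfolding rest_def by simp
qed

lemma length_rest: "length (rest R xs) = card ({..<length xs} - R)"
  unfolding rest_def using length_restf[of R 0 xs] by (simp add: lessThan_atLeast0)

lemma pos_less: "m \<notin> R \<Longrightarrow> m < length xs \<Longrightarrow> pos R m < length (rest R xs)"
  and rest_nth_pos: "m \<notin> R \<Longrightarrow> m < length xs \<Longrightarrow> rest R xs ! pos R m = xs ! m"
  and del_rest: "m \<notin> R \<Longrightarrow> m < length xs \<Longrightarrow> del (pos R m) (rest R xs) = rest (insert m R) xs"
  using restf_posf[of m R 0 xs] unfolding rest_def pos_def by auto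

lemma pos_alt: "pos R m = m - card {j\<in>R. j < m}"
  unfolding pos_def posf_def by simp

lemma pos_mono:
  assumes "a < b" "a \<notin> R"
  shows "pos R a < pos R b"
proof -
  have s: "{j\<in>R. j < b} = {j\<in>R. j < a} \<union> {j\<in>R. a < j \<and> j < b}" using assms by (auto simp: linorder_not_less le_less)
  have f1: "finite {j\<in>R. j < a}" "finite {j\<in>R. a < j \<and> j < b}" by auto
  have c: "card {j\<in>R. j < b} = card {j\<in>R. j < a} + card {j\<in>R. a < j \<and> j < b}"
    unfolding s by (rule card_Un_disjoint) auto
  have c1: "card {j\<in>R. a < j \<and> j < b} \<le> card {a<..<b}" by (rule card_mono) auto
  have c2: "card {j\<in>R. j < a} \<le> card {..<a}" by (rule card_mono) auto
  show ?thesis unfolding pos_alt c using c1 c2 assms by simp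
qed

lemma pos_inj: "a \<notin> R \<Longrightarrow> b \<notin> R \<Longrightarrow> pos R a = pos R b \<Longrightarrow> a = b"
  by (metis linorder_neqE_nat pos_mono less_irrefl)

lemma pos_less_iff: "a \<notin> R \<Longrightarrow> b \<notin> R \<Longrightarrow> pos R a < pos R b \<longleftrightarrow> a < b"
  by (metis linorder_neqE_nat pos_mono less_asym less_irrefl)

lemma pos_insert: "pos (insert a R) m = (if a < m \<and> a \<notin> R then pos R m - 1 else pos R m)"
proof -
  have "card {j\<in>insert a R. j < m} = (if a < m \<and> a \<notin> R then Suc (card {j\<in>R. j < m}) else card {j\<in>R. j < m})"
  proof -
    have e: "{j\<in>insert a R. j < m} = (if a < m then insert a {j\<in>R. j < m} else {j\<in>R. j < m})" by auto
    show ?thesis unfolding e by (auto simp: card_insert_if)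
  qed
  moreover have "card {j\<in>R. j < m} \<le> card {..<m}" by (rule card_mono) auto
  moreover have "a < m \<Longrightarrow> a \<notin> R \<Longrightarrow> card (insert a {j\<in>R. j < m}) \<le> card {..<m}" by (rule card_mono) auto
  ultimately show ?thesis unfolding pos_alt by (auto simp: card_insert_if)
qed

lemma pos_empty[simp]: "pos {} m = m" unfolding pos_alt by simp

lemma bij_pos: "bij_betw (pos R) ({..<length xs} - R) {..<length (rest R xs)}"
proof -
  have inj: "inj_on (pos R) ({..<length xs} - R)" by (auto intro: inj_onI pos_inj)
  have sub: "pos R ` ({..<length xs} - R) \<subseteq> {..<length (rest R xs)}" using pos_less by auto
  have "card (pos R ` ({..<length xs} - R)) = card ({..<length xs} - R)"
    by (rule card_image[OF inj])
  also have "\<dots> = card {..<length (rest R xs)}" by (simp add: length_rest)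
  finally have "card (pos R ` ({..<length xs} - R)) = card {..<length (rest R xs)}" .
  then have "pos R ` ({..<length xs} - R) = {..<length (rest R xs)}"
    using card_subset_eq[OF _ sub] by auto
  then show ?thesis using inj by (simp add: bij_betw_def)
qed

lemma sum_rest_reindex:
  "(\<Sum>k<length (rest R xs). H k) = (\<Sum>m<length xs. if m \<notin> R then H (pos R m) else 0)"
proof -
  have "(\<Sum>k<length (rest R xs). H k) = (\<Sum>m\<in>{..<length xs} - R. H (pos R m))"
    by (rule sum.reindex_bij_betw[OF bij_pos, symmetric])
  also have "\<dots> = (\<Sum>m<length xs. if m \<notin> R then H (pos R m) else 0)"
    by (rule sum.mono_neutral_cong_left) auto
  finally show ?thesis .
qed



lemma sgnv_0[simp]: "sgnv 0 v = v" by (simp add: sgnv_def)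
lemma sgnv_Suc: "sgnv (Suc k) v = - sgnv k v" by (simp add: sgnv_def)
lemma sgnv_sgnv[simp]: "sgnv a (sgnv b v) = sgnv (a + b) v" by (simp add: sgnv_def)
lemma sgnv_add: "sgnv k (u + v) = sgnv k u + sgnv k v" by (simp add: sgnv_def)
lemma sgnv_diff: "sgnv k (u - v) = sgnv k u - sgnv k v" by (simp add: sgnv_def)
lemma sgnv_minus: "sgnv k (- v) = - sgnv k v" by (simp add: sgnv_def)
lemma sgnv_zero[simp]: "sgnv k 0 = 0" by (simp add: sgnv_def)
lemma sgnv_sum: "sgnv k (sum g A) = sum (\<lambda>i. sgnv k (g i)) A" by (simp add: sgnv_def sum_negf)
lemma sgnv_if0: "sgnv k (if c then v else 0) = (if c then sgnv k v else 0)" by simp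
lemma sgnv_eq: "even a = even b \<Longrightarrow> sgnv a v = sgnv b v" by (simp add: sgnv_def)
lemma sgnv_cancel: "odd (a + b) \<Longrightarrow> sgnv a v + sgnv b v = 0" by (auto simp: sgnv_def)
lemma sgnv_SS[simp]: "sgnv (Suc (Suc k)) v = sgnv k v" by (simp add: sgnv_def)

lemma addh:
  assumes "\<And>u v. h (u + v) = h u + h v"
  shows "h 0 = 0" "h (- u) = - h u" "h (u - v) = h u - h v"
    "h (sum g A) = sum (\<lambda>i. h (g i)) A"
    "h (sgnv k u) = sgnv k (h u)" "h (if c then u else 0) = (if c then h u else 0)"
proof -
  have z: "h 0 = 0" using assms[of 0 0] by simp
  show "h 0 = 0" by (fact z)
  have m: "h (- u) = - h u" for u using assms[of u "-u"] z by (simp add: eq_neg_iff_add_eq_0 add.commute)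
  show "h (- u) = - h u" by (fact m)
  show "h (u - v) = h u - h v" using assms[of u "-v"] m[of v] by simp
  show "h (sum g A) = sum (\<lambda>i. h (g i)) A"
    by (induction A rule: infinite_finite_induct) (auto simp: z assms)
  show "h (sgnv k u) = sgnv k (h u)" by (simp add: sgnv_def m)
  show "h (if c then u else 0) = (if c then h u else 0)" by (simp add: z)
qed

lemma pair_box:
  "(\<Sum>(i, j)\<in>{(i, j). i < j \<and> j < (N::nat)}. F i j) = (\<Sum>i<N. \<Sum>j<N. if i < j then F i j else 0)"
proof -
  have "(\<Sum>i<N. \<Sum>j<N. if i < j then F i j else 0) = (\<Sum>(i,j)\<in>{..<N} \<times> {..<N}. if i < j then F i j else 0)"
    by (simp add: sum.cartesian_product)
  also have "\<dots> = (\<Sum>(i, j)\<in>{(i, j). i < j \<and> j < N}. F i j)"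
    by (rule sum.mono_neutral_cong_right) (auto split: if_splits simp: finite_cartesian_product)
  finally show ?thesis by simp
qed

lemma del_Suc_Cons[simp]: "del (Suc k) (u # ys) = u # del k ys" and del_0_Cons[simp]: "del 0 (u # ys) = ys"
  by (simp_all add: del_def)

lemma if_sum0: "(if c then sum F A else 0) = sum (\<lambda>b. if c then F b else 0) A" by simp

lemma dCE_box: "dCE r br g xs = (\<Sum>i<length xs. sgnv i (r (xs ! i) (g (del i xs))))
   + (\<Sum>i<length xs. \<Sum>j<length xs. if i < j then sgnv (i + j) (g (br (xs ! i) (xs ! j) # del i (del j xs))) else 0)"
  unfolding dCE_def pair_box ..

lemma dCE_rest:
  "dCE r br g (rest R xs) = (\<Sum>m<length xs. if m \<notin> R then sgnv (pos R m) (r (xs ! m) (g (rest (insert m R) xs))) else 0)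
   + (\<Sum>a<length xs. \<Sum>b<length xs. if a \<notin> R \<and> b \<notin> R \<and> a < b then
        sgnv (pos R a + pos R b) (g (br (xs ! a) (xs ! b) # rest (insert a (insert b R)) xs)) else 0)"
proof -
  let ?ys = "rest R xs"
  have 1: "(\<Sum>i<length ?ys. sgnv i (r (?ys ! i) (g (del i ?ys))))
    = (\<Sum>m<length xs. if m \<notin> R then sgnv (pos R m) (r (xs ! m) (g (rest (insert m R) xs))) else 0)"
    unfolding sum_rest_reindex by (rule sum.cong) (auto simp: rest_nth_pos del_rest)
  have 2: "(\<Sum>i<length ?ys. \<Sum>j<length ?ys. if i < j then sgnv (i + j) (g (br (?ys ! i) (?ys ! j) # del i (del j ?ys))) else 0)
    = (\<Sum>a<length xs. \<Sum>b<length xs. if a \<notin> R \<and> b \<notin> R \<and> a < b then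
        sgnv (pos R a + pos R b) (g (br (xs ! a) (xs ! b) # rest (insert a (insert b R)) xs)) else 0)"
    unfolding sum_rest_reindex if_sum0
  proof (rule sum.cong[OF refl], rule sum.cong[OF refl])
    fix a b assume ab: "a \<in> {..<length xs}" "b \<in> {..<length xs}"
    show "(if a \<notin> R then if b \<notin> R then if pos R a < pos R b then sgnv (pos R a + pos R b) (g (br (?ys ! pos R a) (?ys ! pos R b) # del (pos R a) (del (pos R b) ?ys))) else 0 else 0 else 0)
      = (if a \<notin> R \<and> b \<notin> R \<and> a < b then sgnv (pos R a + pos R b) (g (br (xs ! a) (xs ! b) # rest (insert a (insert b R)) xs)) else 0)"
    proof (cases "a \<notin> R \<and> b \<notin> R \<and> a < b")
      case True
      have p: "pos R a = pos (insert b R) a" using True by (simp add: pos_insert)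
      have "del (pos R a) (del (pos R b) ?ys) = rest (insert a (insert b R)) xs"
        using True ab by (simp add: del_rest p)
      then show ?thesis using True ab by (simp add: rest_nth_pos pos_less_iff)
    next
      case False
      then show ?thesis using ab by (auto simp: pos_less_iff)
    qed
  qed
  show ?thesis unfolding dCE_box 1 2 ..
qed

lemma dCE_cons:
  "dCE r br g (u # ys) = r u (g ys)
   + (\<Sum>k<length ys. sgnv (Suc k) (r (ys ! k) (g (u # del k ys))))
   + (\<Sum>l<length ys. sgnv (Suc l) (g (br u (ys ! l) # del l ys)))
   + (\<Sum>k<length ys. \<Sum>l<length ys. if k < l then sgnv (k + l) (g (br (ys ! k) (ys ! l) # u # del k (del l ys))) else 0)"
  unfolding dCE_box length_Cons sum.lessThan_Suc_shift by (simp add: sum.distrib add_ac del: sum.lessThan_Suc cong: if_cong)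

lemma dCE_cons_rest:
  "dCE r br g (u # rest R xs) = r u (g (rest R xs))
   + (\<Sum>m<length xs. if m \<notin> R then sgnv (Suc (pos R m)) (r (xs ! m) (g (u # rest (insert m R) xs))) else 0)
   + (\<Sum>m<length xs. if m \<notin> R then sgnv (Suc (pos R m)) (g (br u (xs ! m) # rest (insert m R) xs)) else 0)
   + (\<Sum>a<length xs. \<Sum>b<length xs. if a \<notin> R \<and> b \<notin> R \<and> a < b then
        sgnv (pos R a + pos R b) (g (br (xs ! a) (xs ! b) # u # rest (insert a (insert b R)) xs)) else 0)"
proof -
  let ?ys = "rest R xs"
  have 1: "(\<Sum>k<length ?ys. sgnv (Suc k) (r (?ys ! k) (g (u # del k ?ys))))
     = (\<Sum>m<length xs. if m \<notin> R then sgnv (Suc (pos R m)) (r (xs ! m) (g (u # rest (insert m R) xs))) else 0)"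
    unfolding sum_rest_reindex by (rule sum.cong) (auto simp: rest_nth_pos del_rest)
  have 2: "(\<Sum>k<length ?ys. sgnv (Suc k) (g (br u (?ys ! k) # del k ?ys)))
     = (\<Sum>m<length xs. if m \<notin> R then sgnv (Suc (pos R m)) (g (br u (xs ! m) # rest (insert m R) xs)) else 0)"
    unfolding sum_rest_reindex by (rule sum.cong) (auto simp: rest_nth_pos del_rest)
  have 3: "(\<Sum>i<length ?ys. \<Sum>j<length ?ys. if i < j then sgnv (i + j) (g (br (?ys ! i) (?ys ! j) # u # del i (del j ?ys))) else 0)
    = (\<Sum>a<length xs. \<Sum>b<length xs. if a \<notin> R \<and> b \<notin> R \<and> a < b then
        sgnv (pos R a + pos R b) (g (br (xs ! a) (xs ! b) # u # rest (insert a (insert b R)) xs)) else 0)"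
    unfolding sum_rest_reindex if_sum0
  proof (rule sum.cong[OF refl], rule sum.cong[OF refl])
    fix a b assume ab: "a \<in> {..<length xs}" "b \<in> {..<length xs}"
    show "(if a \<notin> R then if b \<notin> R then if pos R a < pos R b then sgnv (pos R a + pos R b) (g (br (?ys ! pos R a) (?ys ! pos R b) # u # del (pos R a) (del (pos R b) ?ys))) else 0 else 0 else 0)
      = (if a \<notin> R \<and> b \<notin> R \<and> a < b then sgnv (pos R a + pos R b) (g (br (xs ! a) (xs ! b) # u # rest (insert a (insert b R)) xs)) else 0)"
    proof (cases "a \<notin> R \<and> b \<notin> R \<and> a < b")
      case True
      have p: "pos R a = pos (insert b R) a" using True by (simp add: pos_insert)
      have "del (pos R a) (del (pos R b) ?ys) = rest (insert a (insert b R)) xs"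
        using True ab by (simp add: del_rest p)
      then show ?thesis using True ab by (simp add: rest_nth_pos pos_less_iff)
    next
      case False
      then show ?thesis using ab by (auto simp: pos_less_iff)
    qed
  qed
  show ?thesis unfolding dCE_cons 1 2 3 ..
qed



lemma G1:
  fixes P :: "nat \<Rightarrow> nat \<Rightarrow> 'v::ab_group_add"
  shows "(\<Sum>i<N. \<Sum>m<N. if m \<noteq> i then P i m else 0) = (\<Sum>a<N. \<Sum>b<N. if a < b then P a b + P b a else 0)"
proof -
  have "(\<Sum>i<N. \<Sum>m<N. if m \<noteq> i then P i m else 0)
     = (\<Sum>i<N. \<Sum>m<N. (if i < m then P i m else 0) + (if m < i then P i m else 0))"
    by (intro sum.cong refl) auto
  also have "\<dots> = (\<Sum>i<N. \<Sum>m<N. if i < m then P i m else 0) + (\<Sum>i<N. \<Sum>m<N. if m < i then P i m else 0)"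
    by (simp add: sum.distrib)
  also have "(\<Sum>i<N. \<Sum>m<N. if m < i then P i m else 0) = (\<Sum>m<N. \<Sum>i<N. if m < i then P i m else 0)"
    by (rule sum.swap)
  also have "(\<Sum>i<N. \<Sum>m<N. if i < m then P i m else 0) + (\<Sum>m<N. \<Sum>i<N. if m < i then P i m else 0)
     = (\<Sum>a<N. \<Sum>b<N. if a < b then P a b + P b a else 0)"
    by (simp add: sum.distrib[symmetric]) (intro sum.cong refl, auto)
  finally show ?thesis .
qed

lemma G2:
  "(\<Sum>a<N. \<Sum>b<N. \<Sum>m<N. H a b m) = (\<Sum>m<N. \<Sum>a<N. \<Sum>b<(N::nat). H a b m)"
proof -
  have "(\<Sum>a<N. \<Sum>b<N. \<Sum>m<N. H a b m) = (\<Sum>a<N. \<Sum>m<N. \<Sum>b<N. H a b m)"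
    by (rule sum.cong[OF refl], rule sum.swap)
  also have "\<dots> = (\<Sum>m<N. \<Sum>a<N. \<Sum>b<N. H a b m)" by (rule sum.swap)
  finally show ?thesis .
qed

lemma G2':
  "(\<Sum>a<N. \<Sum>b<N. \<Sum>m<N. H a b m) = (\<Sum>a<N. \<Sum>m<N. \<Sum>b<(N::nat). H a b m)"
  by (rule sum.cong[OF refl], rule sum.swap)

lemma G3:
  fixes G :: "nat \<Rightarrow> nat \<Rightarrow> nat \<Rightarrow> 'v::ab_group_add"
  shows "(\<Sum>a<N. \<Sum>b<N. \<Sum>m<N. if a < b \<and> m \<noteq> a \<and> m \<noteq> b then G a b m else 0)
    = (\<Sum>p<N. \<Sum>q<N. \<Sum>t<N. if p < q \<and> q < t then G q t p + G p t q + G p q t else 0)"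
proof -
  have "(\<Sum>a<N. \<Sum>b<N. \<Sum>m<N. if a < b \<and> m \<noteq> a \<and> m \<noteq> b then G a b m else 0)
    = (\<Sum>a<N. \<Sum>b<N. \<Sum>m<N. (if m < a \<and> a < b then G a b m else 0) + (if a < m \<and> m < b then G a b m else 0)
        + (if a < b \<and> b < m then G a b m else 0))"
    by (intro sum.cong refl) auto
  also have "\<dots> = (\<Sum>a<N. \<Sum>b<N. \<Sum>m<N. if m < a \<and> a < b then G a b m else 0)
     + (\<Sum>a<N. \<Sum>b<N. \<Sum>m<N. if a < m \<and> m < b then G a b m else 0)
     + (\<Sum>a<N. \<Sum>b<N. \<Sum>m<N. if a < b \<and> b < m then G a b m else 0)"
    by (simp add: sum.distrib)
  also have "(\<Sum>a<N. \<Sum>b<N. \<Sum>m<N. if m < a \<and> a < b then G a b m else 0)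
     = (\<Sum>m<N. \<Sum>a<N. \<Sum>b<N. if m < a \<and> a < b then G a b m else 0)" by (rule G2)
  also have "(\<Sum>a<N. \<Sum>b<N. \<Sum>m<N. if a < m \<and> m < b then G a b m else 0)
     = (\<Sum>a<N. \<Sum>m<N. \<Sum>b<N. if a < m \<and> m < b then G a b m else 0)" by (rule G2')
  also have "(\<Sum>m<N. \<Sum>a<N. \<Sum>b<N. if m < a \<and> a < b then G a b m else 0)
     + (\<Sum>a<N. \<Sum>m<N. \<Sum>b<N. if a < m \<and> m < b then G a b m else 0)
     + (\<Sum>a<N. \<Sum>b<N. \<Sum>m<N. if a < b \<and> b < m then G a b m else 0)
     = (\<Sum>p<N. \<Sum>q<N. \<Sum>t<N. if p < q \<and> q < t then G q t p + G p t q + G p q t else 0)"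
    by (simp add: sum.distrib[symmetric]) (intro sum.cong refl, auto)
  finally show ?thesis .
qed

lemma G4:
  fixes W :: "nat \<Rightarrow> nat \<Rightarrow> nat \<Rightarrow> nat \<Rightarrow> 'v::ab_group_add"
  shows "(\<Sum>a<N. \<Sum>b<N. \<Sum>c<N. \<Sum>d<N. if a < b \<and> c \<noteq> a \<and> c \<noteq> b \<and> d \<noteq> a \<and> d \<noteq> b \<and> c < d then W a b c d else 0)
    = (\<Sum>a<N. \<Sum>b<N. \<Sum>c<N. \<Sum>d<N. if a < b \<and> c \<noteq> a \<and> c \<noteq> b \<and> d \<noteq> a \<and> d \<noteq> b \<and> c < d \<and> a < c
         then W a b c d + W c d a b else 0)"
proof -
  let ?C = "\<lambda>a b c d. a < b \<and> c \<noteq> a \<and> c \<noteq> b \<and> d \<noteq> a \<and> d \<noteq> b \<and> c < d"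
  have "(\<Sum>a<N. \<Sum>b<N. \<Sum>c<N. \<Sum>d<N. if ?C a b c d then W a b c d else 0)
    = (\<Sum>a<N. \<Sum>b<N. \<Sum>c<N. \<Sum>d<N. (if ?C a b c d \<and> a < c then W a b c d else 0) + (if ?C a b c d \<and> c < a then W a b c d else 0))"
    by (intro sum.cong refl) auto
  also have "\<dots> = (\<Sum>a<N. \<Sum>b<N. \<Sum>c<N. \<Sum>d<N. if ?C a b c d \<and> a < c then W a b c d else 0)
     + (\<Sum>a<N. \<Sum>b<N. \<Sum>c<N. \<Sum>d<N. if ?C a b c d \<and> c < a then W a b c d else 0)"
    by (simp add: sum.distrib)
  also have "(\<Sum>a<N. \<Sum>b<N. \<Sum>c<N. \<Sum>d<N. if ?C a b c d \<and> c < a then W a b c d else 0)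
     = (\<Sum>c<N. \<Sum>d<N. \<Sum>a<N. \<Sum>b<N. if ?C a b c d \<and> c < a then W a b c d else 0)"
  proof -
    have s1: "(\<Sum>a<N. \<Sum>b<N. \<Sum>c<N. \<Sum>d<N. H a b c d) = (\<Sum>c<N. \<Sum>d<N. \<Sum>a<N. \<Sum>b<N. H a b c d)" for H :: "nat \<Rightarrow> nat \<Rightarrow> nat \<Rightarrow> nat \<Rightarrow> 'v"
    proof -
      have "(\<Sum>a<N. \<Sum>b<N. \<Sum>c<N. \<Sum>d<N. H a b c d) = (\<Sum>a<N. \<Sum>c<N. \<Sum>d<N. \<Sum>b<N. H a b c d)"
        by (rule sum.cong[OF refl], rule G2[where H="\<lambda>c d b. H _ b c d", symmetric])
      also have "\<dots> = (\<Sum>c<N. \<Sum>d<N. \<Sum>a<N. \<Sum>b<N. H a b c d)"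
        by (rule G2[where N=N and H = "\<lambda>c d a. \<Sum>b<N. H a b c d", symmetric])
      finally show ?thesis .
    qed
    show ?thesis by (rule s1)
  qed
  also have "(\<Sum>a<N. \<Sum>b<N. \<Sum>c<N. \<Sum>d<N. if ?C a b c d \<and> a < c then W a b c d else 0)
     + (\<Sum>c<N. \<Sum>d<N. \<Sum>a<N. \<Sum>b<N. if ?C a b c d \<and> c < a then W a b c d else 0)
     = (\<Sum>a<N. \<Sum>b<N. \<Sum>c<N. \<Sum>d<N. if ?C a b c d \<and> a < c then W a b c d + W c d a b else 0)"
    by (simp add: sum.distrib[symmetric]) (intro sum.cong refl, auto)
  finally show ?thesis by (simp only: conj_assoc)
qed



lemma pos1: "pos {i} m = (if i < m then m - 1 else m)"
  by (simp add: pos_insert)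

lemma pos2: "a \<noteq> b \<Longrightarrow> pos {a, b} m = m - (if a < m then 1 else 0) - (if b < m then 1 else 0)"
  by (simp add: pos_insert)

lemma length_rest_sub: "S \<subseteq> {..<length xs} \<Longrightarrow> length (rest S xs) = length xs - card S"
  unfolding length_rest by (subst card_Diff_subset) (auto intro: finite_subset)

context
  fixes r :: "'g::ab_group_add \<Rightarrow> 'v::ab_group_add \<Rightarrow> 'v" and br :: "'g \<Rightarrow> 'g \<Rightarrow> 'g"
    and f :: "'g list \<Rightarrow> 'v" and n :: nat and xs :: "'g list"
  assumes radd: "\<And>x u v. r x (u + v) = r x u + r x v"
    and rep: "\<And>x y u. r (br x y) u = r x (r y u) - r y (r x u)"
    and jac: "\<And>p q t. br (br p q) t - br (br p t) q + br (br q t) p = 0"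
    and fadd0: "\<And>u v R. length R + 1 = n \<Longrightarrow> f ((u + v) # R) = f (u # R) + f (v # R)"
    and fswap: "\<And>u v R. length R + 2 = n \<Longrightarrow> f (u # v # R) = - f (v # u # R)"
    and lenxs: "length xs = n + 2"
begin

lemma PW13:
  assumes "a < b"
  shows "sgnv (a + pos {a} b) (r (xs ! a) (r (xs ! b) (f (rest {b, a} xs))))
    + sgnv (b + pos {b} a) (r (xs ! b) (r (xs ! a) (f (rest {a, b} xs))))
    + sgnv (a + b) (r (br (xs ! a) (xs ! b)) (f (rest {a, b} xs))) = 0"
proof -
  have s: "sgnv (a + pos {a} b) v = - sgnv (a + b) v" for v
    using assms by (cases b) (auto simp: pos1 sgnv_Suc)
  have s2: "sgnv (b + pos {b} a) v = sgnv (a + b) v" for v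
    using assms by (simp add: pos1 add.commute)
  show ?thesis using assms by (simp add: s s2 rep sgnv_diff insert_commute)
qed

lemma PW24:
  assumes "a < b" "m \<noteq> a" "m \<noteq> b"
  shows "sgnv (m + (pos {m} a + pos {m} b)) (r (xs ! m) (f (br (xs ! a) (xs ! b) # rest {a, b, m} xs)))
    + sgnv (a + b + Suc (pos {a, b} m)) (r (xs ! m) (f (br (xs ! a) (xs ! b) # rest {m, a, b} xs))) = 0"
proof -
  have e: "{m, a, b} = {a, b, m}" by auto
  have o: "odd (m + (pos {m} a + pos {m} b) + (a + b + Suc (pos {a, b} m)))"
    using assms by (simp add: pos1 pos2) presburger
  show ?thesis unfolding e by (rule sgnv_cancel[OF o])
qed

lemma PW5:
  assumes "p < q" "q < t" "t < length xs"
  shows "sgnv (q + t + Suc (pos {q, t} p)) (f (br (br (xs ! q) (xs ! t)) (xs ! p) # rest {p, q, t} xs))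
    + sgnv (p + t + Suc (pos {p, t} q)) (f (br (br (xs ! p) (xs ! t)) (xs ! q) # rest {q, p, t} xs))
    + sgnv (p + q + Suc (pos {p, q} t)) (f (br (br (xs ! p) (xs ! q)) (xs ! t) # rest {t, p, q} xs)) = 0"
proof -
  let ?R = "rest {p, q, t} xs"
  have e1: "{q, p, t} = {p, q, t}" "{t, p, q} = {p, q, t}" by auto
  have "length ?R = length xs - card {p, q, t}" using assms by (intro length_rest_sub) auto
  moreover have "card {p, q, t} = 3" using assms by simp
  ultimately have lR: "length ?R + 1 = n" using assms lenxs by simp
  define h where "h u = f (u # ?R)" for u
  have hadd: "h (u + v) = h u + h v" for u v unfolding h_def using fadd0[OF lR] .
  note hh = addh[of h, OF hadd]
  let ?A = "br (br (xs ! q) (xs ! t)) (xs ! p)" and ?B = "br (br (xs ! p) (xs ! t)) (xs ! q)"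
    and ?C = "br (br (xs ! p) (xs ! q)) (xs ! t)"
  have j: "?C - ?B + ?A = 0" by (rule jac)
  have "h (?C - ?B + ?A) = h ?C - h ?B + h ?A" by (simp add: hadd hh)
  then have hz: "h ?C - h ?B + h ?A = 0" using j hh(1) by simp
  have s1: "sgnv (q + t + Suc (pos {q, t} p)) v = sgnv (p + q + t + 1) v" for v
    using assms by (intro sgnv_eq) (simp add: pos2, presburger?)
  have s2: "sgnv (p + t + Suc (pos {p, t} q)) v = - sgnv (p + q + t + 1) v" for v
  proof -
    have "sgnv (p + t + Suc (pos {p, t} q)) v = sgnv (p + q + t) v"
      using assms by (intro sgnv_eq) (simp add: pos2, presburger?)
    then show ?thesis by (simp add: sgnv_Suc)
  qed
  have pt: "pos {p, q} t = t - 2" using assms by (simp add: pos2)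
  have s3: "sgnv (p + q + Suc (pos {p, q} t)) v = sgnv (p + q + t + 1) v" for v
    unfolding pt using assms by (intro sgnv_eq) presburger
  have "sgnv (p + q + t + 1) (h ?A) - sgnv (p + q + t + 1) (h ?B) + sgnv (p + q + t + 1) (h ?C)
     = sgnv (p + q + t + 1) (h ?C - h ?B + h ?A)" by (simp add: sgnv_add sgnv_diff)
  also have "\<dots> = 0" using hz by simp
  finally show ?thesis unfolding e1 s1 s2 s3 h_def by simp
qed

lemma PW6:
  assumes "a < b" "c < d" "c \<noteq> a" "c \<noteq> b" "d \<noteq> a" "d \<noteq> b" "b < length xs" "d < length xs"
  shows "sgnv (a + b + (pos {a, b} c + pos {a, b} d)) (f (br (xs ! c) (xs ! d) # br (xs ! a) (xs ! b) # rest {c, d, a, b} xs))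
    + sgnv (c + d + (pos {c, d} a + pos {c, d} b)) (f (br (xs ! a) (xs ! b) # br (xs ! c) (xs ! d) # rest {a, b, c, d} xs)) = 0"
proof -
  let ?R = "rest {a, b, c, d} xs"
  have e1: "{c, d, a, b} = {a, b, c, d}" by auto
  have "length ?R = length xs - card {a, b, c, d}" using assms by (intro length_rest_sub) auto
  moreover have "card {a, b, c, d} = 4" using assms by simp
  ultimately have lR: "length ?R + 2 = n" using assms lenxs by simp
  have s: "sgnv (a + b + (pos {a, b} c + pos {a, b} d)) v = sgnv (c + d + (pos {c, d} a + pos {c, d} b)) v" for v
    using assms by (intro sgnv_eq) (simp add: pos2, presburger)
  show ?thesis unfolding e1 s fswap[OF lR, of "br (xs ! c) (xs ! d)"] by (simp add: sgnv_minus)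
qed

lemma rfacts: "r x 0 = 0" "r x (sum g A) = sum (\<lambda>i. r x (g i)) A" "r x (sgnv k u) = sgnv k (r x u)"
    "r x (if c then u else 0) = (if c then r x u else 0)" "r x (- u) = - r x u"
  using addh[of "r x", OF radd] by auto

lemma dd_zero: "dCE r br (dCE r br f) xs = 0"
proof -
  define N where "N = length xs"
  define P1 where "P1 i m = sgnv (i + pos {i} m) (r (xs ! i) (r (xs ! m) (f (rest {m, i} xs))))" for i m
  define P2 where "P2 i c d = sgnv (i + (pos {i} c + pos {i} d)) (r (xs ! i) (f (br (xs ! c) (xs ! d) # rest {c, d, i} xs)))" for i c d
  define Q3 where "Q3 a b = sgnv (a + b) (r (br (xs ! a) (xs ! b)) (f (rest {a, b} xs)))" for a b
  define Q4 where "Q4 a b m = sgnv (a + b + Suc (pos {a, b} m)) (r (xs ! m) (f (br (xs ! a) (xs ! b) # rest {m, a, b} xs)))" for a b m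
  define Q5 where "Q5 a b m = sgnv (a + b + Suc (pos {a, b} m)) (f (br (br (xs ! a) (xs ! b)) (xs ! m) # rest {m, a, b} xs))" for a b m
  define Q6 where "Q6 a b c d = sgnv (a + b + (pos {a, b} c + pos {a, b} d)) (f (br (xs ! c) (xs ! d) # br (xs ! a) (xs ! b) # rest {c, d, a, b} xs))" for a b c d
  have E1: "dCE r br (dCE r br f) xs = (\<Sum>i<N. sgnv i (r (xs ! i) (dCE r br f (rest {i} xs))))
     + (\<Sum>a<N. \<Sum>b<N. if a < b then sgnv (a + b) (dCE r br f (br (xs ! a) (xs ! b) # rest {a, b} xs)) else 0)"
    using dCE_rest[of r br "dCE r br f" "{}" xs] unfolding N_def by (simp cong: if_cong)
  have E2: "sgnv i (r (xs ! i) (dCE r br f (rest {i} xs)))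
     = (\<Sum>m<N. if m \<noteq> i then P1 i m else 0) + (\<Sum>c<N. \<Sum>d<N. if c \<noteq> i \<and> d \<noteq> i \<and> c < d then P2 i c d else 0)" for i
    unfolding dCE_rest P1_def P2_def N_def by (simp add: rfacts radd sgnv_add sgnv_sum sgnv_if0 cong: if_cong)
  have E3: "(if a < b then sgnv (a + b) (dCE r br f (br (xs ! a) (xs ! b) # rest {a, b} xs)) else 0)
     = (if a < b then Q3 a b else 0) + (\<Sum>m<N. if a < b \<and> m \<noteq> a \<and> m \<noteq> b then Q4 a b m else 0)
      + (\<Sum>m<N. if a < b \<and> m \<noteq> a \<and> m \<noteq> b then Q5 a b m else 0)
      + (\<Sum>c<N. \<Sum>d<N. if a < b \<and> c \<noteq> a \<and> c \<noteq> b \<and> d \<noteq> a \<and> d \<noteq> b \<and> c < d then Q6 a b c d else 0)" for a b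
  proof (cases "a < b")
    case True
    then show ?thesis unfolding dCE_cons_rest Q3_def Q4_def Q5_def Q6_def N_def
      by (simp add: sgnv_add sgnv_sum sgnv_if0 cong: if_cong)
  next
    case False
    then show ?thesis by simp
  qed
  define S1 where "S1 = (\<Sum>i<N. \<Sum>m<N. if m \<noteq> i then P1 i m else 0)"
  define S2 where "S2 = (\<Sum>i<N. \<Sum>c<N. \<Sum>d<N. if c \<noteq> i \<and> d \<noteq> i \<and> c < d then P2 i c d else 0)"
  define S3 where "S3 = (\<Sum>a<N. \<Sum>b<N. if a < b then Q3 a b else 0)"
  define S4 where "S4 = (\<Sum>a<N. \<Sum>b<N. \<Sum>m<N. if a < b \<and> m \<noteq> a \<and> m \<noteq> b then Q4 a b m else 0)"
  define S5 where "S5 = (\<Sum>a<N. \<Sum>b<N. \<Sum>m<N. if a < b \<and> m \<noteq> a \<and> m \<noteq> b then Q5 a b m else 0)"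
  define S6 where "S6 = (\<Sum>a<N. \<Sum>b<N. \<Sum>c<N. \<Sum>d<N. if a < b \<and> c \<noteq> a \<and> c \<noteq> b \<and> d \<noteq> a \<and> d \<noteq> b \<and> c < d then Q6 a b c d else 0)"
  have tot: "dCE r br (dCE r br f) xs = (S1 + S2) + (S3 + S4 + S5 + S6)"
    unfolding E1 E2 E3 S1_def S2_def S3_def S4_def S5_def S6_def by (simp only: sum.distrib)
  have W13: "a < b \<Longrightarrow> P1 a b + P1 b a + Q3 a b = 0" for a b
    unfolding P1_def Q3_def by (rule PW13)
  have W24: "a < b \<Longrightarrow> m \<noteq> a \<Longrightarrow> m \<noteq> b \<Longrightarrow> P2 m a b + Q4 a b m = 0" for a b m
    unfolding P2_def Q4_def by (rule PW24)
  have W5: "p < q \<Longrightarrow> q < t \<Longrightarrow> t < N \<Longrightarrow> Q5 q t p + Q5 p t q + Q5 p q t = 0" for p q t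
    unfolding Q5_def N_def by (rule PW5)
  have W6: "a < b \<Longrightarrow> c < d \<Longrightarrow> c \<noteq> a \<Longrightarrow> c \<noteq> b \<Longrightarrow> d \<noteq> a \<Longrightarrow> d \<noteq> b \<Longrightarrow> b < N \<Longrightarrow> d < N \<Longrightarrow> Q6 a b c d + Q6 c d a b = 0" for a b c d
    unfolding Q6_def N_def by (rule PW6)
  have C13: "S1 + S3 = 0"
  proof -
    have "S1 + S3 = (\<Sum>a<N. \<Sum>b<N. if a < b then P1 a b + P1 b a + Q3 a b else 0)"
      unfolding S1_def S3_def G1 by (simp add: sum.distrib[symmetric]) (intro sum.cong refl, auto)
    also have "\<dots> = 0" by (intro sum.neutral ballI) (auto simp: W13)
    finally show ?thesis .
  qed
  have C24: "S2 + S4 = 0"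
  proof -
    have "S4 = (\<Sum>m<N. \<Sum>a<N. \<Sum>b<N. if a < b \<and> m \<noteq> a \<and> m \<noteq> b then Q4 a b m else 0)"
      unfolding S4_def by (rule G2)
    then have "S2 + S4 = (\<Sum>i<N. \<Sum>c<N. \<Sum>d<N. if c \<noteq> i \<and> d \<noteq> i \<and> c < d then P2 i c d + Q4 c d i else 0)"
      unfolding S2_def by (simp add: sum.distrib[symmetric]) (intro sum.cong refl, auto)
    also have "\<dots> = 0" by (intro sum.neutral ballI) (auto simp: W24)
    finally show ?thesis .
  qed
  have C5: "S5 = 0"
  proof -
    have "S5 = (\<Sum>p<N. \<Sum>q<N. \<Sum>t<N. if p < q \<and> q < t then Q5 q t p + Q5 p t q + Q5 p q t else 0)"
      unfolding S5_def by (rule G3)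
    also have "\<dots> = 0" by (intro sum.neutral ballI) (auto simp: W5)
    finally show ?thesis .
  qed
  have C6: "S6 = 0"
  proof -
    have "S6 = (\<Sum>a<N. \<Sum>b<N. \<Sum>c<N. \<Sum>d<N. if a < b \<and> c \<noteq> a \<and> c \<noteq> b \<and> d \<noteq> a \<and> d \<noteq> b \<and> c < d \<and> a < c
         then Q6 a b c d + Q6 c d a b else 0)"
      unfolding S6_def by (rule G4)
    also have "\<dots> = 0" by (intro sum.neutral ballI) (auto simp: W6)
    finally show ?thesis .
  qed
  show ?thesis unfolding tot using C13 C24 C5 C6
    by (metis add.assoc add.commute add_0)
qed

end



definition addf :: "('a::ab_group_add \<Rightarrow> 'b::ab_group_add) \<Rightarrow> bool" where
  "addf F \<longleftrightarrow> (\<forall>u v. F (u + v) = F u + F v)"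

definition slotadd :: "nat \<Rightarrow> ('g::ab_group_add list \<Rightarrow> 'v::ab_group_add) \<Rightarrow> bool" where
  "slotadd N g \<longleftrightarrow> (\<forall>ys k. length ys = N \<longrightarrow> k < N \<longrightarrow> addf (\<lambda>w. g (ys[k := w])))"

lemma addf_sum: "(\<And>i. i \<in> A \<Longrightarrow> addf (F i)) \<Longrightarrow> addf (\<lambda>w. \<Sum>i\<in>A. F i w)"
  unfolding addf_def by (simp add: sum.distrib)
lemma addf_sgnv: "addf F \<Longrightarrow> addf (\<lambda>w. sgnv k (F w))"
  unfolding addf_def by (simp add: sgnv_add)
lemma addf_if: "(c \<Longrightarrow> addf F) \<Longrightarrow> addf (\<lambda>w. if c then F w else 0)"
  unfolding addf_def by simp
lemma addf_comp: "addf h \<Longrightarrow> addf F \<Longrightarrow> addf (\<lambda>w. h (F w))"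
  unfolding addf_def by simp
lemma addf_add: "addf F \<Longrightarrow> addf G \<Longrightarrow> addf (\<lambda>w. F w + G w)"
  unfolding addf_def by (simp add: add_ac)
lemma addf_id: "addf (\<lambda>w. w)" unfolding addf_def by simp

lemma slotadd_D: "slotadd N g \<Longrightarrow> length ys = N \<Longrightarrow> k < N \<Longrightarrow> addf (\<lambda>w. g (ys[k := w]))"
  unfolding slotadd_def by blast

lemma slotadd_0: "slotadd N g \<Longrightarrow> length R + 1 = N \<Longrightarrow> addf (\<lambda>w. g (w # R))"
  using slotadd_D[of N g "0 # R" 0] by simp

lemma length_del: "i < length xs \<Longrightarrow> length (del i xs) = length xs - 1"
  by (simp add: del_def)

lemma nth_del: "i < length xs \<Longrightarrow> j < length xs - 1 \<Longrightarrow> del i xs ! j = xs ! (if j < i then j else Suc j)"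
  by (auto simp: del_def nth_append min_def)

lemma del_upd_same: "del k (xs[k := w]) = del k xs"
  by (simp add: del_def take_update_cancel drop_update_cancel)

lemma del_upd_other:
  assumes "k < length xs" "i < length xs" "i \<noteq> k"
  shows "del i (xs[k := w]) = (del i xs)[(if k < i then k else k - 1) := w]"
proof (rule nth_equalityI)
  show "length (del i (xs[k := w])) = length ((del i xs)[(if k < i then k else k - 1) := w])"
    using assms by (simp add: length_del)
  fix j assume "j < length (del i (xs[k := w]))"
  then have j: "j < length xs - 1" using assms by (simp add: length_del)
  show "del i (xs[k := w]) ! j = (del i xs)[(if k < i then k else k - 1) := w] ! j"
    using assms j by (auto simp: nth_del nth_list_update length_del)
qed

lemma map_del: "map h (del i xs) = del i (map h xs)"
  by (simp add: del_def take_map drop_map)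

lemma if_add0: "(if c then a + b else 0) = (if c then a else 0) + (if c then b else (0::'a::monoid_add))"
  by simp

context
  fixes r :: "'g::ab_group_add \<Rightarrow> 'v::ab_group_add \<Rightarrow> 'v" and br :: "'g \<Rightarrow> 'g \<Rightarrow> 'g"
  assumes radd: "\<And>x u v. r x (u + v) = r x u + r x v"
begin

lemma r_facts: "r x 0 = 0" "r x (sum g A) = sum (\<lambda>i. r x (g i)) A" "r x (sgnv k u) = sgnv k (r x u)"
    "r x (- u) = - r x u" "r x (u - v) = r x u - r x v"
  using addh[of "r x", OF radd] by auto

lemma dCE_add: "dCE r br (\<lambda>ys. g1 ys + g2 ys) xs = dCE r br g1 xs + dCE r br g2 xs"
  unfolding dCE_box by (simp add: radd sgnv_add if_add0 sum.distrib add_ac cong: if_cong)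

lemma dCE_Phi:
  assumes "\<And>u v. Phi (u + v) = Phi u + Phi v" "\<And>x u. Phi (r0 x u) = r x (Phi u)"
  shows "dCE r br (\<lambda>ys. Phi (g ys)) xs = Phi (dCE r0 br g xs)"
proof -
  note h = addh[of Phi, OF assms(1)]
  show ?thesis unfolding dCE_box by (simp add: h assms cong: if_cong)
qed

lemma dCE_sgnv: "dCE r br (\<lambda>ys. sgnv k (g ys)) xs = sgnv k (dCE r br g xs)"
  by (rule dCE_Phi) (auto simp: sgnv_add r_facts)

lemma dCE_minus: "dCE r br (\<lambda>ys. - g ys) xs = - dCE r br g xs"
  by (rule dCE_Phi) (auto simp: r_facts)

lemma dCE_diff: "dCE r br (\<lambda>ys. g1 ys - g2 ys) xs = dCE r br g1 xs - dCE r br g2 xs"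
  using dCE_add[of g1 "\<lambda>ys. - g2 ys" xs] dCE_minus[of g2 xs] by simp

lemma dCE_zero: "dCE r br (\<lambda>_. 0) xs = 0"
  unfolding dCE_box by (simp add: r_facts cong: if_cong)

end

lemma dCE_cong:
  assumes "\<And>ys. length ys + 1 = length xs \<Longrightarrow> g ys = g' ys"
  shows "dCE r br g xs = dCE r br g' xs"
proof -
  have 1: "g (del i xs) = g' (del i xs)" if "i < length xs" for i
    using that by (intro assms) (simp add: length_del)
  have 2: "g (br (xs ! i) (xs ! j) # del i (del j xs)) = g' (br (xs ! i) (xs ! j) # del i (del j xs))"
    if "i < j" "j < length xs" for i j
    using that by (intro assms) (simp add: length_del)
  show ?thesis unfolding dCE_box using 1 2 by (intro arg_cong2[where f="(+)"] sum.cong refl) auto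
qed

lemma dCE_mapphi:
  assumes "\<And>x u. r' x u = r (phi x) u" "\<And>x y. phi (br x y) = br (phi x) (phi y)"
  shows "dCE r' br (\<lambda>ys. g (map phi ys)) xs = dCE r br g (map phi xs)"
  unfolding dCE_box by (simp add: assms map_del[symmetric] cong: if_cong)



context
  fixes r :: "'g::ab_group_add \<Rightarrow> 'v::ab_group_add \<Rightarrow> 'v" and br :: "'g \<Rightarrow> 'g \<Rightarrow> 'g"
  assumes radd: "\<And>x u v. r x (u + v) = r x u + r x v"
    and raddx: "\<And>x y u. r (x + y) u = r x u + r y u"
    and bradd1: "\<And>x y z. br (x + y) z = br x z + br y z"
    and bradd2: "\<And>x y z. br z (x + y) = br z x + br z y"
begin

lemma dCE_slotadd:
  assumes f: "slotadd n f"
  shows "slotadd (Suc n) (dCE r br f)"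
  unfolding slotadd_def
proof (intro allI impI)
  fix ys :: "'g list" and k assume ly: "length ys = Suc n" and k: "k < Suc n"
  have A: "addf (\<lambda>w. sgnv i (r (ys[k := w] ! i) (f (del i (ys[k := w])))))" if i: "i < Suc n" for i
  proof (cases "i = k")
    case True
    then show ?thesis using k ly
      by (simp add: del_upd_same) (intro addf_sgnv, simp add: addf_def raddx)
  next
    case False
    let ?k' = "if k < i then k else k - 1"
    have e: "del i (ys[k := w]) = (del i ys)[?k' := w]" for w
      using False i k ly by (intro del_upd_other) auto
    have a: "addf (\<lambda>w. f ((del i ys)[?k' := w]))"
      using False i k ly by (intro slotadd_D[OF f]) (auto simp: length_del)
    have e2: "ys[k := w] ! i = ys ! i" for w using False by simp
    show ?thesis unfolding e e2
      by (intro addf_sgnv addf_comp[OF _ a]) (simp add: addf_def radd)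
  qed
  have B: "addf (\<lambda>w. if i < j then sgnv (i + j) (f (br (ys[k := w] ! i) (ys[k := w] ! j) # del i (del j (ys[k := w])))) else 0)"
    if i: "i < Suc n" and j: "j < Suc n" for i j
  proof (rule addf_if)
    assume ij: "i < j"
    have ln: "length (del i (del j ys)) + 1 = n" using ij j ly by (simp add: length_del)
    show "addf (\<lambda>w. sgnv (i + j) (f (br (ys[k := w] ! i) (ys[k := w] ! j) # del i (del j (ys[k := w])))))"
    proof (intro addf_sgnv)
      consider "k = i" | "k = j" | "k \<noteq> i" "k \<noteq> j" by blast
      then show "addf (\<lambda>w. f (br (ys[k := w] ! i) (ys[k := w] ! j) # del i (del j (ys[k := w]))))"
      proof cases
        case 1
        have e: "del i (del j (ys[k := w])) = del i (del j ys)" for w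
          using 1 ij j ly by (simp add: del_upd_other del_upd_same)
        show ?thesis unfolding e using 1 ij j ly
          by (simp, intro addf_comp[OF slotadd_0[OF f ln]]) (simp add: addf_def bradd1)
      next
        case 2
        have e: "del i (del j (ys[k := w])) = del i (del j ys)" for w
          using 2 by (simp add: del_upd_same)
        show ?thesis unfolding e using 2 ij j ly
          by (simp, intro addf_comp[OF slotadd_0[OF f ln]]) (simp add: addf_def bradd2)
      next
        case 3
        let ?k1 = "if k < j then k else k - 1"
        let ?k2 = "if ?k1 < i then ?k1 else ?k1 - 1"
        have e1: "del j (ys[k := w]) = (del j ys)[?k1 := w]" for w
          using 3 j k ly by (intro del_upd_other) auto
        have e2: "del i ((del j ys)[?k1 := w]) = (del i (del j ys))[?k2 := w]" for w
          using 3 ij j k ly by (intro del_upd_other) (auto simp: length_del)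
        have e3: "br (ys[k := w] ! i) (ys[k := w] ! j) # (del i (del j ys))[?k2 := w]
            = (br (ys ! i) (ys ! j) # del i (del j ys))[Suc ?k2 := w]" for w
          using 3 by simp
        have "addf (\<lambda>w. f ((br (ys ! i) (ys ! j) # del i (del j ys))[Suc ?k2 := w]))"
          using 3 ij j k ly ln by (intro slotadd_D[OF f]) (auto simp: length_del)
        then show ?thesis unfolding e1 e2 e3 .
      qed
    qed
  qed
  show "addf (\<lambda>w. dCE r br f (ys[k := w]))"
    unfolding dCE_box length_list_update ly
    by (intro addf_add addf_sum A B) auto
qed

end

lemma T_exp:
  assumes g: "slotadd N g" and lx: "length xs = N"
  shows "(\<Sum>S\<in>{S. S \<subseteq> {..<N} \<and> S \<noteq> {}}. g (map (\<lambda>i. if i \<in> S then D (xs ! i) else xs ! i) [0..<N]))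
     = g (map (\<lambda>x. x + D x) xs) - g xs"
proof -
  define LL where "LL m S = map (\<lambda>i. if i < m then (if i \<in> S then D (xs ! i) else xs ! i) else xs ! i + D (xs ! i)) [0..<N]" for m S
  have ind: "m \<le> N \<Longrightarrow> (\<Sum>S\<in>Pow {..<m}. g (LL m S)) = g (LL 0 {})" for m
  proof (induction m)
    case 0 then show ?case by simp
  next
    case (Suc m)
    then have mN: "m < N" by simp
    have P: "Pow {..<Suc m} = Pow {..<m} \<union> insert m ` Pow {..<m}"
      by (simp add: lessThan_Suc Pow_insert)
    have disj: "Pow {..<m} \<inter> insert m ` Pow {..<m} = {}" by auto
    have inj: "inj_on (insert m) (Pow {..<m})"
      by (rule inj_onI) (metis Pow_iff insert_ident lessThan_iff less_irrefl subset_iff)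
    have pt: "g (LL (Suc m) S) + g (LL (Suc m) (insert m S)) = g (LL m S)" if S: "S \<subseteq> {..<m}" for S
    proof -
      have l1: "LL (Suc m) S = (LL m S)[m := xs ! m]"
        unfolding LL_def using S mN by (intro nth_equalityI) (auto simp: nth_list_update)
      have l2: "LL (Suc m) (insert m S) = (LL m S)[m := D (xs ! m)]"
        unfolding LL_def using S mN by (intro nth_equalityI) (auto simp: nth_list_update)
      have l3: "LL m S = (LL m S)[m := xs ! m + D (xs ! m)]"
        unfolding LL_def using S mN by (intro nth_equalityI) (auto simp: nth_list_update)
      have a: "addf (\<lambda>w. g ((LL m S)[m := w]))" using mN by (intro slotadd_D[OF g]) (auto simp: LL_def)
      show ?thesis unfolding l1 l2 using a l3 unfolding addf_def by metis
    qed
    have "(\<Sum>S\<in>Pow {..<Suc m}. g (LL (Suc m) S)) = (\<Sum>S\<in>Pow {..<m}. g (LL (Suc m) S)) + (\<Sum>S\<in>insert m ` Pow {..<m}. g (LL (Suc m) S))"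
      unfolding P by (rule sum.union_disjoint) (auto simp: disj)
    also have "(\<Sum>S\<in>insert m ` Pow {..<m}. g (LL (Suc m) S)) = (\<Sum>S\<in>Pow {..<m}. g (LL (Suc m) (insert m S)))"
      by (rule sum.reindex[OF inj, unfolded comp_def])
    also have "(\<Sum>S\<in>Pow {..<m}. g (LL (Suc m) S)) + (\<Sum>S\<in>Pow {..<m}. g (LL (Suc m) (insert m S)))
       = (\<Sum>S\<in>Pow {..<m}. g (LL m S))"
      by (simp add: sum.distrib[symmetric] pt)
    also have "\<dots> = g (LL 0 {})" using Suc by simp
    finally show ?case .
  qed
  have LN: "LL N S = map (\<lambda>i. if i \<in> S then D (xs ! i) else xs ! i) [0..<N]" for S
    unfolding LL_def by (intro map_cong) auto
  have L0: "LL 0 {} = map (\<lambda>x. x + D x) xs"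
    unfolding LL_def using lx by (intro nth_equalityI) auto
  have Le: "map (\<lambda>i. if i \<in> {} then D (xs ! i) else xs ! i) [0..<N] = xs"
    using lx by (intro nth_equalityI) auto
  have Sset: "{S. S \<subseteq> {..<N} \<and> S \<noteq> {}} = Pow {..<N} - {{}}" by auto
  have "(\<Sum>S\<in>Pow {..<N}. g (LL N S)) = g (LL N {}) + (\<Sum>S\<in>Pow {..<N} - {{}}. g (LL N S))"
    by (rule sum.remove) auto
  then show ?thesis using ind[of N] unfolding Sset LN L0 Le by (simp add: algebra_simps)
qed

lemma T_op_exp:
  assumes "slotadd (length xs) g"
  shows "T_op D K g xs = sgnv (length xs) (g (map (\<lambda>x. x + D x) xs) - g xs - K (g xs))"
  unfolding T_op_def T_exp[OF assms refl] ..



lemma lin_add: "Vector_Spaces.linear s1 s2 h \<Longrightarrow> h (x + y) = h x + h y"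
  unfolding linear_iff by blast

lemma alt_props:
  fixes sg :: "'k::field \<Rightarrow> 'g::ab_group_add \<Rightarrow> 'g" and sv :: "'k \<Rightarrow> 'v::ab_group_add \<Rightarrow> 'v"
    and g :: "'g list \<Rightarrow> 'v"
  assumes "alt_multilinear sg sv m g"
  shows "slotadd m g" "\<And>u v R. length R + 2 = m \<Longrightarrow> g (u # v # R) = - g (v # u # R)"
proof -
  show sa: "slotadd m g" unfolding slotadd_def addf_def
  proof (intro allI impI)
    fix ys :: "'g list" and k u v assume "length ys = m" "k < m"
    then have "Vector_Spaces.linear sg sv (\<lambda>y. g (ys[k := y]))"
      using assms unfolding alt_multilinear_def by blast
    from lin_add[OF this] show "g (ys[k := u + v]) = g (ys[k := u]) + g (ys[k := v])" by simp
  qed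
  fix u v :: 'g and R :: "'g list" assume l: "length R + 2 = m"
  have z: "g (w # w # R) = 0" for w
  proof -
    have "\<forall>xs i j. length xs = m \<longrightarrow> i < j \<longrightarrow> j < m \<longrightarrow> xs ! i = xs ! j \<longrightarrow> g xs = 0"
      using assms unfolding alt_multilinear_def by blast
    from this[rule_format, of "w # w # R" 0 1] show ?thesis using l by simp
  qed
  have a0: "addf (\<lambda>w. g (w # y # R))" for y using slotadd_0[OF sa, of "y # R"] l by simp
  have a1: "addf (\<lambda>w. g (y # w # R))" for y using slotadd_D[OF sa, of "y # 0 # R" 1] l by simp
  have "0 = g ((u + v) # (u + v) # R)" using z by simp
  also have "\<dots> = g (u # (u + v) # R) + g (v # (u + v) # R)" using a0 unfolding addf_def by simp
  also have "\<dots> = g (u # u # R) + g (u # v # R) + (g (v # u # R) + g (v # v # R))"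
    using a1 unfolding addf_def by simp
  also have "\<dots> = g (u # v # R) + g (v # u # R)" using z by simp
  finally have "g (u # v # R) + g (v # u # R) = 0" by (rule sym)
  then show "g (u # v # R) = - g (v # u # R)" by (simp add: eq_neg_iff_add_eq_0)
qed

theorem theorem4p10:
  fixes sg :: "'k::field \<Rightarrow> 'g::ab_group_add \<Rightarrow> 'g"
    and sv :: "'k \<Rightarrow> 'v::ab_group_add \<Rightarrow> 'v"
    and br :: "'g \<Rightarrow> 'g \<Rightarrow> 'g" and D :: "'g \<Rightarrow> 'g"
    and rho :: "'g \<Rightarrow> 'v \<Rightarrow> 'v" and K :: "'v \<Rightarrow> 'v"
  assumes "difference_lie_algebra sg br D"
    and "diff_representation sg br D sv rho K"
    and "cochain sg sv n c"
  shows "(\<forall>xs. length xs = n + 2 \<longrightarrow> fst (delta rho br D K (delta rho br D K c)) xs = 0)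
       \<and> (\<forall>xs. length xs = n + 1 \<longrightarrow> snd (delta rho br D K (delta rho br D K c)) xs = 0)"
proof -
  have LA: "lie_algebra sg br" and LD: "Vector_Spaces.linear sg sg D"
    and Dbr: "\<And>x y. D (br x y) = br x (D y) - br y (D x) + br (D x) (D y)"
    using assms(1) unfolding difference_lie_algebra_def by auto
  have l1: "\<forall>x. Vector_Spaces.linear sg sg (br x)" and l2: "\<forall>y. Vector_Spaces.linear sg sg (\<lambda>x. br x y)"
    using LA unfolding lie_algebra_def by auto
  have bradd2: "\<And>x y z. br z (x + y) = br z x + br z y"
    using l1 lin_add by blast
  have bradd1: "\<And>x y z. br (x + y) z = br x z + br y z"
  proof -
    fix x y z show "br (x + y) z = br x z + br y z" using lin_add[OF l2[rule_format, of z]] by simp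
  qed
  have brxx: "\<And>x. br x x = 0" and jacobi: "\<And>x y z. br x (br y z) + br y (br z x) + br z (br x y) = 0"
    using LA unfolding lie_algebra_def by auto
  have br_neg2: "br z (- x) = - br z x" for x z using addh(2)[of "br z", OF bradd2] .
  have anti: "br x y = - br y x" for x y
  proof -
    have "0 = br (x + y) (x + y)" using brxx by simp
    also have "\<dots> = br x (x + y) + br y (x + y)" by (rule bradd1)
    also have "\<dots> = br x x + br x y + (br y x + br y y)" by (simp only: bradd2)
    also have "\<dots> = br x y + br y x" by (simp add: brxx)
    finally have "br x y + br y x = 0" by (rule sym)
    then show ?thesis by (simp add: eq_neg_iff_add_eq_0)
  qed
  have jac: "br (br p q) t - br (br p t) q + br (br q t) p = 0" for p q t
  proof -
    have e1: "br (br p q) t = - br t (br p q)" by (rule anti)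
    have e2: "br (br p t) q = - br q (br p t)" by (rule anti)
    have e2': "br q (br p t) = - br q (br t p)" using anti[of p t] br_neg2 by simp
    have e3: "br (br q t) p = - br p (br q t)" by (rule anti)
    have J: "br t (br p q) + br p (br q t) + br q (br t p) = 0" by (rule jacobi)
    have "- br t (br p q) - - (- br q (br t p)) + - br p (br q t) = - (br t (br p q) + br p (br q t) + br q (br t p))"
      by (simp add: algebra_simps)
    then show ?thesis unfolding e1 e2 e2' e3 J by simp
  qed
  have Dadd: "D (x + y) = D x + D y" for x y using LD by (rule lin_add)
  define phi where "phi x = x + D x" for x
  have phi_br: "phi (br x y) = br (phi x) (phi y)" for x y
    unfolding phi_def Dbr by (simp add: bradd1 bradd2 anti[of y "D x"] algebra_simps)
  have radd: "\<And>x u v. rho x (u + v) = rho x u + rho x v"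
    and raddx: "\<And>x y u. rho (x + y) u = rho x u + rho y u"
    and rep: "\<And>x y u. rho (br x y) u = rho x (rho y u) - rho y (rho x u)"
    and Kadd: "\<And>u v. K (u + v) = K u + K v"
    and Kr: "\<And>x u. K (rho x u) = rho (D x) u + rho x (K u) + rho (D x) (K u)"
    using assms(2) unfolding diff_representation_def by (auto intro: lin_add[where h="\<lambda>x. rho x _"] lin_add)
  define rho' where "rho' x u = rho x u + rho (D x) u" for x u
  have rho'_phi: "rho' x u = rho (phi x) u" for x u unfolding rho'_def phi_def raddx ..
  have radd': "\<And>x u v. rho' x (u + v) = rho' x u + rho' x v" unfolding rho'_phi radd by simp
  have raddx': "\<And>x y u. rho' (x + y) u = rho' x u + rho' y u"
    unfolding rho'_def by (simp add: raddx Dadd add_ac)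
  have rep': "\<And>x y u. rho' (br x y) u = rho' x (rho' y u) - rho' y (rho' x u)"
    unfolding rho'_phi phi_br rep ..
  define Phi where "Phi v = v + K v" for v
  have Phiadd: "Phi (u + v) = Phi u + Phi v" for u v unfolding Phi_def Kadd by (simp add: add_ac)
  have Phir: "Phi (rho x u) = rho' x (Phi u)" for x u
    unfolding Phi_def rho'_def Kr by (simp add: radd add_ac)
  obtain f theta where c: "c = (f, theta)" by (cases c)
  have n1: "n \<ge> 1" and fa: "alt_multilinear sg sv n f"
    and th: "if n = 1 then theta = (\<lambda>_. 0) else alt_multilinear sg sv (n - 1) theta"
    using assms(3) unfolding cochain_def c by auto
  note fp = alt_props[OF fa]
  have fadd0: "\<And>u v R. length R + 1 = n \<Longrightarrow> f ((u + v) # R) = f (u # R) + f (v # R)"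
    using slotadd_0[OF fp(1)] unfolding addf_def by blast
  have part1: "length xs = n + 2 \<Longrightarrow> dCE rho br (dCE rho br f) xs = 0" for xs
    by (rule dd_zero[OF radd rep jac fadd0 fp(2)])
  have ddth: "dCE rho' br (dCE rho' br theta) xs = 0" if l: "length xs = n + 1" for xs
  proof (cases "n = 1")
    case True
    then have t0: "theta = (\<lambda>_. 0)" using th by simp
    have "dCE rho' br (\<lambda>_. 0) = (\<lambda>_. 0)" by (rule ext, rule dCE_zero[OF radd'])
    then show ?thesis unfolding t0 by (simp add: dCE_zero[OF radd'])
  next
    case False
    then have ta: "alt_multilinear sg sv (n - 1) theta" using th by simp
    note tp = alt_props[OF ta]
    have tadd0: "\<And>u v R. length R + 1 = n - 1 \<Longrightarrow> theta ((u + v) # R) = theta (u # R) + theta (v # R)"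
      using slotadd_0[OF tp(1)] unfolding addf_def by blast
    show ?thesis using l False n1 by (intro dd_zero[OF radd' rep' jac tadd0 tp(2)]) auto
  qed
  have fsa: "slotadd n f" by (rule fp(1))
  have dsa: "slotadd (Suc n) (dCE rho br f)" by (rule dCE_slotadd[OF radd raddx bradd1 bradd2 fsa])
  have map_phi: "map (\<lambda>x. x + D x) ys = map phi ys" for ys unfolding phi_def ..
  have part2: "dCE rho' br (\<lambda>ys. dCE rho' br theta ys + T_op D K f ys) xs + T_op D K (dCE rho br f) xs = 0"
    if l: "length xs = n + 1" for xs
  proof -
    have T1: "dCE rho' br (T_op D K f) xs = dCE rho' br (\<lambda>ys. sgnv n (f (map phi ys) - Phi (f ys))) xs"
    proof (rule dCE_cong)
      fix ys :: "'g list" assume "length ys + 1 = length xs"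
      then have ly: "length ys = n" using l by simp
      show "T_op D K f ys = sgnv n (f (map phi ys) - Phi (f ys))"
        unfolding T_op_exp[OF fsa[folded ly]] ly map_phi Phi_def by (simp add: diff_diff_eq)
    qed
    have T2: "dCE rho' br (\<lambda>ys. sgnv n (f (map phi ys) - Phi (f ys))) xs
        = sgnv n (dCE rho br f (map phi xs) - Phi (dCE rho br f xs))"
    proof -
      have a: "dCE rho' br (\<lambda>ys. sgnv n (f (map phi ys) - Phi (f ys))) xs
          = sgnv n (dCE rho' br (\<lambda>ys. f (map phi ys) - Phi (f ys)) xs)"
        by (rule dCE_sgnv[OF radd'])
      have b: "dCE rho' br (\<lambda>ys. f (map phi ys) - Phi (f ys)) xs
          = dCE rho' br (\<lambda>ys. f (map phi ys)) xs - dCE rho' br (\<lambda>ys. Phi (f ys)) xs"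
        by (rule dCE_diff[OF radd'])
      have c: "dCE rho' br (\<lambda>ys. f (map phi ys)) xs = dCE rho br f (map phi xs)"
        by (rule dCE_mapphi) (rule rho'_phi, rule phi_br)
      have d: "dCE rho' br (\<lambda>ys. Phi (f ys)) xs = Phi (dCE rho br f xs)"
        by (rule dCE_Phi) (rule radd', rule Phiadd, rule Phir)
      show ?thesis unfolding a b c d ..
    qed
    have T3: "T_op D K (dCE rho br f) xs = sgnv (Suc n) (dCE rho br f (map phi xs) - Phi (dCE rho br f xs))"
      using dsa l unfolding T_op_exp[OF dsa[folded l[simplified]]] map_phi Phi_def
      by (simp add: diff_diff_eq)
    show ?thesis unfolding dCE_add[OF radd'] ddth[OF l] T1 T2 T3
      by (simp add: sgnv_cancel)
  qed
  show ?thesis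
    unfolding c delta_def partial_op_def rho'_def[symmetric]
    using part1 part2 by simp
qed

end
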